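(* Let $(G_n)$ be a sequence of graphs, $G_n$ having vertex set $V$ with $|V|=n$, average degree $d$, minimum degree $\delta$, maximum degree $\Delta$, and let $\lambda=\lambda(n)$ satisfy $|\lambda_i|\le\lambda$ for all adjacency eigenvalues $\lambda_i$, $i\ge2$. Suppose $\Delta-\delta\le R\lambda$ for a constant $R>0$ and $\lambda/d\to0$. Then for all sufficiently large $n$, for all $U,W\subseteq V$, $$\left|e(U,W)-\frac{d}{n}|U||W|\right|\le\overline\lambda\sqrt{|U||W|},\qquad\text{where }\overline\lambda=(10R+1)\lambda.$$
   Context: Adjacency eigenvalues are ordered $\lambda_1\ge\dots\ge\lambda_n$. For $U,W\subseteq V$, $e(U,W)$ is the number of ordered pairs $(u,w)$ with $u\in U$, $w\in W$ and $u$ adjacent to $w$. *)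

theory Defs
  imports "HOL-Analysis.Analysis" "Jordan_Normal_Form.Char_Poly"
begin

definition simple_graph_on :: "nat \<Rightarrow> (nat \<Rightarrow> nat \<Rightarrow> bool) \<Rightarrow> bool" where
  "simple_graph_on n E \<longleftrightarrow> (\<forall>u<n. \<forall>v<n. E u v = E v u) \<and> (\<forall>u<n. \<not> E u u)"

definition adj_mat :: "nat \<Rightarrow> (nat \<Rightarrow> nat \<Rightarrow> bool) \<Rightarrow> real mat" where
  "adj_mat n E = mat n n (\<lambda>(i, j). if E i j then 1 else 0)"

text \<open>Adjacency eigenvalues (with multiplicity) sorted in nonincreasing order:
  list index i corresponds to lambda_(i+1).\<close>
definition adj_eigenvalues :: "nat \<Rightarrow> (nat \<Rightarrow> nat \<Rightarrow> bool) \<Rightarrow> real list" where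
  "adj_eigenvalues n E = rev (sorted_list_of_multiset (proots (char_poly (adj_mat n E))))"

definition degree_in :: "nat \<Rightarrow> (nat \<Rightarrow> nat \<Rightarrow> bool) \<Rightarrow> nat \<Rightarrow> nat" where
  "degree_in n E v = card {u. u < n \<and> E v u}"

definition avg_degree :: "nat \<Rightarrow> (nat \<Rightarrow> nat \<Rightarrow> bool) \<Rightarrow> real" where
  "avg_degree n E = (\<Sum>v<n. real (degree_in n E v)) / real n"

definition min_degree :: "nat \<Rightarrow> (nat \<Rightarrow> nat \<Rightarrow> bool) \<Rightarrow> nat" where
  "min_degree n E = Min (degree_in n E ` {..<n})"

definition max_degree :: "nat \<Rightarrow> (nat \<Rightarrow> nat \<Rightarrow> bool) \<Rightarrow> nat" where
  "max_degree n E = Max (degree_in n E ` {..<n})"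

definition edges_between :: "(nat \<Rightarrow> nat \<Rightarrow> bool) \<Rightarrow> nat set \<Rightarrow> nat set \<Rightarrow> nat" where
  "edges_between E U W = card {(u, w). u \<in> U \<and> w \<in> W \<and> E u w}"

end

theory Submission
  imports Defs "Jordan_Normal_Form.Schur_Decomposition" "HOL-Combinatorics.Permutations"
begin

lemma real_sym_eigenvalue:
  fixes A :: "real mat"
  assumes A: "A \<in> carrier_mat n n" and sym: "transpose_mat A = A" and n: "n > 0"
  shows "\<exists>e. eigenvalue A e"
proof -
  let ?C = "map_mat complex_of_real A"
  have C: "?C \<in> carrier_mat n n" using A by simp
  obtain as where cp: "char_poly ?C = (\<Prod>a\<leftarrow>as. [:-a,1:])" and len: "length as = n"
    using char_poly_factorized[OF C] by blast
  define z where "z = as ! 0"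
  have zin: "z \<in> set as" using len n unfolding z_def by auto
  have "poly (char_poly ?C) z = 0" unfolding cp poly_prod_list
    using zin by (induct as) auto
  hence "eigenvalue ?C z" using eigenvalue_root_char_poly[OF C] by simp
  then obtain v where ev: "eigenvector ?C v z" unfolding eigenvalue_def by blast
  hence v: "v \<in> carrier_vec n" and v0: "v \<noteq> 0\<^sub>v n" and Cv: "?C *\<^sub>v v = z \<cdot>\<^sub>v v"
    unfolding eigenvector_def using C by auto
  define s where "s = (\<Sum>i<n. cnj (v $ i) * v $ i)"
  have s_real: "s = of_real (\<Sum>i<n. (cmod (v $ i))^2)"
    unfolding s_def by (simp add: mult.commute[of "cnj _"] complex_mult_cnj cmod_power2)
  obtain k where k: "k < n" "v $ k \<noteq> 0" using v v0 by (metis eq_vecI carrier_vecD index_zero_vec)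
  have "(\<Sum>i<n. (cmod (v $ i))^2) \<ge> (cmod (v $ k))^2"
    using k by (intro member_le_sum) auto
  moreover have "(cmod (v $ k))^2 > 0" using k by simp
  ultimately have s0: "s \<noteq> 0" unfolding s_real by (metis less_le_trans of_real_eq_0_iff order_less_irrefl)
  have Cvi: "\<And>i. i < n \<Longrightarrow> (\<Sum>j<n. of_real (A $$ (i,j)) * v $ j) = z * v $ i"
  proof -
    fix i assume i: "i < n"
    have "(?C *\<^sub>v v) $ i = z * v $ i" using Cv i v by simp
    moreover have "(?C *\<^sub>v v) $ i = (\<Sum>j<n. of_real (A $$ (i,j)) * v $ j)"
      using i A v by (simp add: scalar_prod_def atLeast0LessThan)
    ultimately show "(\<Sum>j<n. of_real (A $$ (i,j)) * v $ j) = z * v $ i" by simp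
  qed
  have symA: "\<And>i j. i < n \<Longrightarrow> j < n \<Longrightarrow> A $$ (i,j) = A $$ (j,i)"
    using sym A by (metis carrier_matD index_transpose_mat(1))
  have "z * s = (\<Sum>i<n. cnj (v $ i) * (z * v $ i))"
    unfolding s_def by (simp add: sum_distrib_left ac_simps)
  also have "\<dots> = (\<Sum>i<n. \<Sum>j<n. cnj (v $ i) * of_real (A $$ (i,j)) * v $ j)"
    by (simp add: Cvi[symmetric] sum_distrib_left ac_simps)
  also have "\<dots> = (\<Sum>j<n. \<Sum>i<n. cnj (v $ i) * of_real (A $$ (j,i)) * v $ j)"
    by (subst sum.swap) (simp add: symA)
  also have "\<dots> = (\<Sum>j<n. v $ j * cnj (\<Sum>i<n. of_real (A $$ (j,i)) * v $ i))"
    by (simp add: sum_distrib_left ac_simps)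
  also have "\<dots> = (\<Sum>j<n. v $ j * cnj (z * v $ j))"
    by (simp add: Cvi)
  also have "\<dots> = cnj z * s" unfolding s_def by (simp add: sum_distrib_left ac_simps)
  finally have "z = cnj z" using s0 by simp
  hence zr: "z = of_real (Re z)" by (metis Reals_cnj_iff complex_is_Real_iff of_real_Re)
  have "of_real (poly (char_poly A) (Re z)) = poly (char_poly ?C) z"
    by (subst zr, simp add: of_real_hom.char_poly_hom[OF A] of_real_hom.poly_map_poly)
  also have "\<dots> = 0" by fact
  finally have "poly (char_poly A) (Re z) = 0" by simp
  thus ?thesis using eigenvalue_root_char_poly[OF A] by blast
qed

lemma conjugate_real_vec[simp]: "conjugate (w :: real vec) = w"
  by (rule eq_vecI) auto

lemma scalarc_real[simp]: "(v :: real vec) \<bullet>c w = v \<bullet> w"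
  by (simp add: scalar_prod_def)

lemma orthonormal_completion:
  fixes v :: "real vec"
  assumes v: "v \<in> carrier_vec n" and nv: "v \<bullet> v = 1"
  shows "\<exists>us. length us = n \<and> set us \<subseteq> carrier_vec n \<and> hd us = v \<and>
     (\<forall>i<n. \<forall>j<n. us!i \<bullet> us!j = (if i=j then 1 else 0))"
proof -
  interpret cof_vec_space n "TYPE(real)" .
  have v0: "v \<noteq> 0\<^sub>v n" using nv v by auto
  define b where "b = basis_completion v"
  from basis_completion[OF v v0, folded b_def]
  have dist_b: "distinct b" and indep: "\<not> lin_dep (set b)" and b: "set b \<subseteq> carrier_vec n"
    and hdb: "hd b = v" and len_b: "length b = n" by auto
  have n: "n \<noteq> 0" using v0 v by (auto intro!: eq_vecI)
  from hdb len_b n obtain vs where bv: "b = v # vs" by (cases b, auto)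
  define ws where "ws = gram_schmidt n b"
  from gram_schmidt_result[OF b dist_b indep ws_def]
  have ws: "set ws \<subseteq> carrier_vec n" "corthogonal ws" "length ws = n"
    by (auto simp: len_b)
  from gram_schmidt_hd[OF v, of vs, folded bv] have hdws: "hd ws = v" unfolding ws_def .
  define us where "us = map (\<lambda>w. (1 / sqrt (w \<bullet> w)) \<cdot>\<^sub>v w) ws"
  have len: "length us = n" using ws unfolding us_def by simp
  have car: "set us \<subseteq> carrier_vec n" using ws unfolding us_def by auto
  have hd: "hd us = v" unfolding us_def using hdws ws n nv
    by (cases ws) auto
  have orth: "us!i \<bullet> us!j = (if i=j then 1 else 0)" if i: "i < n" and j: "j < n" for i j
  proof -
    have wi: "ws!i \<in> carrier_vec n" and wj: "ws!j \<in> carrier_vec n" using ws i j by auto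
    have pos: "ws!i \<bullet> ws!i > 0" 
      using corthogonalD[OF ws(2), of i i] ws i conjugate_square_ge_0_vec[of "ws!i"] by auto
    have "us!i \<bullet> us!j = (1 / sqrt (ws!i \<bullet> ws!i)) * (1 / sqrt (ws!j \<bullet> ws!j)) * (ws!i \<bullet> ws!j)"
      unfolding us_def using i j ws wi wj by (simp add: smult_scalar_prod_distrib scalar_prod_smult_distrib)
    also have "\<dots> = (if i=j then 1 else 0)"
    proof (cases "i = j")
      case True
      then show ?thesis using pos by (simp add: field_simps)
    next
      case False
      then show ?thesis using corthogonalD[OF ws(2), of i j] ws i j by auto
    qed
    finally show ?thesis .
  qed
  show ?thesis using len car hd orth by blast
qed


lemma blk_mult:
  fixes A B C D :: "'a :: comm_ring_1 mat"
  assumes AB: "A \<in> carrier_mat 1 1" "B \<in> carrier_mat 1 1" and CD: "C \<in> carrier_mat m m" "D \<in> carrier_mat m m"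
  shows "four_block_mat A (0\<^sub>m 1 m) (0\<^sub>m m 1) C * four_block_mat B (0\<^sub>m 1 m) (0\<^sub>m m 1) D
     = four_block_mat (A*B) (0\<^sub>m 1 m) (0\<^sub>m m 1) (C*D)"
proof -
  have "four_block_mat A (0\<^sub>m 1 m) (0\<^sub>m m 1) C * four_block_mat B (0\<^sub>m 1 m) (0\<^sub>m m 1) D
     = four_block_mat (A * B + 0\<^sub>m 1 m * 0\<^sub>m m 1) (A * 0\<^sub>m 1 m + 0\<^sub>m 1 m * D)
      (0\<^sub>m m 1 * B + C * 0\<^sub>m m 1) (0\<^sub>m m 1 * 0\<^sub>m 1 m + C * D)"
    by (rule mult_four_block_mat[OF AB(1) zero_carrier_mat zero_carrier_mat CD(1) AB(2) zero_carrier_mat zero_carrier_mat CD(2)])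
  also have "\<dots> = four_block_mat (A*B) (0\<^sub>m 1 m) (0\<^sub>m m 1) (C*D)"
    using AB CD by (intro cong_four_block_mat) auto
  finally show ?thesis .
qed
lemma blk_transpose:
  fixes A C :: "'a :: comm_ring_1 mat"
  assumes "A \<in> carrier_mat 1 1" "C \<in> carrier_mat m m"
  shows "transpose_mat (four_block_mat A (0\<^sub>m 1 m) (0\<^sub>m m 1) C) = four_block_mat (transpose_mat A) (0\<^sub>m 1 m) (0\<^sub>m m 1) (transpose_mat C)"
  using assms by (subst transpose_four_block_mat[OF assms(1) zero_carrier_mat zero_carrier_mat assms(2)]) auto

lemma spectral:
  fixes A :: "real mat"
  assumes "A \<in> carrier_mat n n" "transpose_mat A = A"
  shows "\<exists>P D. P \<in> carrier_mat n n \<and> D \<in> carrier_mat n n \<and> diagonal_mat D \<and>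
     transpose_mat P * P = 1\<^sub>m n \<and> P * transpose_mat P = 1\<^sub>m n \<and> A = P * D * transpose_mat P"
  using assms
proof (induct n arbitrary: A)
  case 0
  show ?case
    by (rule exI[of _ "1\<^sub>m 0"], rule exI[of _ A]) (use 0 in \<open>auto simp: diagonal_mat_def\<close>)
next
  case (Suc m A)
  define n where "n = Suc m"
  have A: "A \<in> carrier_mat n n" and symA: "transpose_mat A = A" using Suc n_def by auto
  obtain e where e: "eigenvalue A e" using real_sym_eigenvalue[OF A symA] n_def by auto
  define v0 where "v0 = find_eigenvector A e"
  from find_eigenvector[OF A e] have "eigenvector A v0 e" unfolding v0_def .
  hence v0: "v0 \<in> carrier_vec n" "v0 \<noteq> 0\<^sub>v n" and Av0: "A *\<^sub>v v0 = e \<cdot>\<^sub>v v0"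
    unfolding eigenvector_def using A by auto
  have pos: "v0 \<bullet> v0 > 0" using conjugate_square_greater_0_vec[OF v0(1)] v0(2) by simp
  define v where "v = (1 / sqrt (v0 \<bullet> v0)) \<cdot>\<^sub>v v0"
  have v: "v \<in> carrier_vec n" unfolding v_def using v0 by simp
  have nv: "v \<bullet> v = 1" unfolding v_def using v0 pos
    by (simp add: smult_scalar_prod_distrib scalar_prod_smult_distrib field_simps)
  have Av: "A *\<^sub>v v = e \<cdot>\<^sub>v v" unfolding v_def using A v0 Av0
    by (simp add: mult_mat_vec smult_smult_assoc mult.commute)
  obtain us :: "real vec list" where len: "length us = n" and car: "set us \<subseteq> carrier_vec n" and hd: "hd us = v"
    and orth: "\<And>i j. i < n \<Longrightarrow> j < n \<Longrightarrow> us!i \<bullet> us!j = (if i=j then (1::real) else 0)"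
    using orthonormal_completion[OF v nv] by blast
  have us0: "us ! 0 = v" using hd len n_def by (cases us) auto
  define W where "W = mat_of_cols n us"
  have W: "W \<in> carrier_mat n n" unfolding W_def using mat_of_cols_carrier(1)[of n us] len by simp
  have colW: "col W i = us ! i" if "i < n" for i
    unfolding W_def using that len car by (intro col_mat_of_cols) auto
  have WtW: "transpose_mat W * W = 1\<^sub>m n"
    by (rule eq_matI) (use W in \<open>auto simp: colW orth\<close>)
  have WWt: "W * transpose_mat W = 1\<^sub>m n"
    using mat_mult_left_right_inverse[OF _ W WtW] W by auto
  define A' where "A' = transpose_mat W * A * W"
  have A': "A' \<in> carrier_mat n n" unfolding A'_def using W A by auto
  have symA': "transpose_mat A' = A'"
    unfolding A'_def using W A symA
    by (simp add: transpose_mult[of _ n n _ n] assoc_mult_mat[of _ n n _ n _ n])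
  have A'col: "A' $$ (i,0) = (if i = 0 then e else 0)" if i: "i < n" for i
  proof -
    have "A' = transpose_mat W * (A * W)" unfolding A'_def using W A by (simp add: assoc_mult_mat)
    hence "A' $$ (i,0) = row (transpose_mat W) i \<bullet> col (A * W) 0"
      using i W A n_def by simp
    also have "col (A * W) 0 = A *\<^sub>v v" using A W n_def colW[of 0] us0 by (simp add: mult_mat_vec_def)
    also have "row (transpose_mat W) i = us ! i" using W i colW by simp
    moreover have "us ! i \<in> carrier_vec n" using car len i by auto
    ultimately show ?thesis using Av orth[OF i, of 0] n_def v us0
      by (simp add: scalar_prod_smult_distrib[of _ n])
  qed
  have A'row: "A' $$ (0,j) = (if j = 0 then e else 0)" if j: "j < n" for j
    using A'col[OF j] symA' A' j n_def by (metis carrier_matD index_transpose_mat(1) zero_less_Suc)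
  define A3 where "A3 = mat m m (\<lambda>(i,j). A' $$ (Suc i, Suc j))"
  have A3: "A3 \<in> carrier_mat m m" unfolding A3_def by simp
  have symA3: "transpose_mat A3 = A3"
    unfolding A3_def using symA' A' n_def
    by (intro eq_matI) (auto, metis Suc_less_eq carrier_matD index_transpose_mat(1))
  obtain P3 D3 where P3: "P3 \<in> carrier_mat m m" and D3: "D3 \<in> carrier_mat m m"
    and diag3: "diagonal_mat D3" and P3tP3: "transpose_mat P3 * P3 = 1\<^sub>m m"
    and P3P3t: "P3 * transpose_mat P3 = 1\<^sub>m m" and A3eq: "A3 = P3 * D3 * transpose_mat P3"
    using Suc(1)[OF A3 symA3] by blast
  define E1 :: "real mat" where "E1 = mat 1 1 (\<lambda>_. e)"
  have E1: "E1 \<in> carrier_mat 1 1" unfolding E1_def by simp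
  have A'blk: "A' = four_block_mat E1 (0\<^sub>m 1 m) (0\<^sub>m m 1) A3"
    by (rule eq_matI) (use A' n_def A'col A'row in \<open>auto simp: E1_def A3_def\<close>)
  define P1 where "P1 = four_block_mat (1\<^sub>m 1) (0\<^sub>m 1 m) (0\<^sub>m m 1) P3"
  define D where "D = four_block_mat E1 (0\<^sub>m 1 m) (0\<^sub>m m 1) D3"
  have P3t: "transpose_mat P3 \<in> carrier_mat m m" using P3 by simp
  have P1: "P1 \<in> carrier_mat n n" unfolding P1_def n_def using four_block_carrier_mat[OF one_carrier_mat[of 1] P3] by simp
  have D: "D \<in> carrier_mat n n" unfolding D_def n_def using four_block_carrier_mat[OF E1 D3] by simp
  have P1t: "transpose_mat P1 = four_block_mat (1\<^sub>m 1) (0\<^sub>m 1 m) (0\<^sub>m m 1) (transpose_mat P3)"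
    unfolding P1_def using blk_transpose[OF one_carrier_mat P3] by simp
  have P1tP1: "transpose_mat P1 * P1 = 1\<^sub>m n"
    unfolding P1t unfolding P1_def n_def blk_mult[OF one_carrier_mat one_carrier_mat P3t P3] P3tP3
    by simp
  have P1P1t: "P1 * transpose_mat P1 = 1\<^sub>m n"
    unfolding P1t unfolding P1_def n_def blk_mult[OF one_carrier_mat one_carrier_mat P3 P3t] P3P3t
    by simp
  have PD: "P1 * D = four_block_mat (1\<^sub>m 1 * E1) (0\<^sub>m 1 m) (0\<^sub>m m 1) (P3 * D3)"
    unfolding P1_def D_def by (rule blk_mult[OF one_carrier_mat E1 P3 D3])
  have "P1 * D * transpose_mat P1 = four_block_mat (1\<^sub>m 1 * E1 * 1\<^sub>m 1) (0\<^sub>m 1 m) (0\<^sub>m m 1) (P3 * D3 * transpose_mat P3)"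
    unfolding PD P1t
    by (rule blk_mult[OF mult_carrier_mat[OF one_carrier_mat E1] one_carrier_mat mult_carrier_mat[OF P3 D3] P3t])
  also have "\<dots> = A'" unfolding A'blk A3eq using E1 by simp
  finally have P1DP1: "P1 * D * transpose_mat P1 = A'" .
  have diagD: "diagonal_mat D"
    using diag3 D3 unfolding diagonal_mat_def D_def E1_def by auto
  define P where "P = W * P1"
  have P: "P \<in> carrier_mat n n" unfolding P_def using W P1 by simp
  have Pt: "transpose_mat P = transpose_mat P1 * transpose_mat W"
    unfolding P_def using W P1 by (simp add: transpose_mult)
  have "transpose_mat P * P = transpose_mat P1 * (transpose_mat W * W) * P1"
    unfolding Pt unfolding P_def using W P1 by (simp add: assoc_mult_mat[of _ n n _ n _ n])
  hence PtP: "transpose_mat P * P = 1\<^sub>m n" using WtW P1tP1 P1 by simp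
  have "P * transpose_mat P = W * (P1 * transpose_mat P1) * transpose_mat W"
    unfolding Pt unfolding P_def using W P1 by (simp add: assoc_mult_mat[of _ n n _ n _ n])
  hence PPt: "P * transpose_mat P = 1\<^sub>m n" using WWt P1P1t W by simp
  have "P * D * transpose_mat P = W * (P1 * D * transpose_mat P1) * transpose_mat W"
    unfolding Pt unfolding P_def using W P1 D by (simp add: assoc_mult_mat[of _ n n _ n _ n])
  also have "\<dots> = (W * transpose_mat W) * A * (W * transpose_mat W)"
    unfolding P1DP1 A'_def using W A by (simp add: assoc_mult_mat[of _ n n _ n _ n])
  also have "\<dots> = A" using WWt A by simp
  finally show ?case using P D diagD PtP PPt unfolding n_def by metis
qed


lemma proots_linear_prod: "proots (\<Prod>a\<leftarrow>as. [:- a, 1:]) = mset (as :: 'a :: idom list)"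
proof (induct as)
  case (Cons a as)
  have "(\<Prod>a\<leftarrow>as. [:- a, 1:]) \<noteq> 0" by (auto simp: prod_list_zero_iff)
  hence "proots ([:- a, 1:] * (\<Prod>a\<leftarrow>as. [:- a, 1:])) = proots [:- a, 1:] + proots (\<Prod>a\<leftarrow>as. [:- a, 1:])"
    by (intro proots_mult) auto
  then show ?case using Cons by (simp only: list.map prod_list.Cons proots_linear_factor) simp
qed simp

lemma sym_decomp:
  fixes A :: "real mat"
  assumes A: "A \<in> carrier_mat n n" and sym: "transpose_mat A = A"
  shows "\<exists>\<mu> \<phi>. mset (map \<mu> [0..<n]) = proots (char_poly A) \<and>
     (\<forall>v<n. \<forall>w<n. A $$ (v,w) = (\<Sum>i<n. \<mu> i * \<phi> i v * \<phi> i w)) \<and>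
     (\<forall>v<n. \<forall>w<n. (\<Sum>i<n. \<phi> i v * \<phi> i w) = (if v = w then 1 else 0)) \<and>
     (\<forall>i<n. \<forall>j<n. (\<Sum>v<n. \<phi> i v * \<phi> j v) = (if i = j then 1 else 0))"
proof -
  obtain P D where P: "P \<in> carrier_mat n n" and D: "D \<in> carrier_mat n n" and diag: "diagonal_mat D"
    and PtP: "transpose_mat P * P = 1\<^sub>m n" and PPt: "P * transpose_mat P = 1\<^sub>m n"
    and AP: "A = P * D * transpose_mat P"
    using spectral[OF A sym] by blast
  define \<mu> where "\<mu> i = D $$ (i,i)" for i
  define \<phi> where "\<phi> i v = P $$ (v,i)" for i v
  have "similar_mat A D"
    by (rule similar_matI[of A D P "transpose_mat P" n]) (use A P D PtP PPt AP in auto)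
  hence "char_poly A = char_poly D" by (rule char_poly_similar)
  also have "\<dots> = (\<Prod>a\<leftarrow>diag_mat D. [:- a, 1:])"
    by (rule char_poly_upper_triangular[OF D]) (use diag D in \<open>auto simp: diagonal_mat_def upper_triangular_def\<close>)
  also have "diag_mat D = map \<mu> [0..<n]" unfolding diag_mat_def \<mu>_def using D by simp
  finally have "char_poly A = (\<Prod>a\<leftarrow>map \<mu> [0..<n]. [:- a, 1:])" .
  hence cp: "proots (char_poly A) = mset (map \<mu> [0..<n])" by (simp only: proots_linear_prod)
  have Aeq: "A $$ (v,w) = (\<Sum>i<n. \<mu> i * \<phi> i v * \<phi> i w)" if v: "v < n" and w: "w < n" for v w
  proof -
    have "A $$ (v,w) = (\<Sum>i<n. P $$ (v, i) * (\<Sum>k<n. D $$ (i, k) * P $$ (w, k)))"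
      unfolding AP using P D v w by (simp add: scalar_prod_def atLeast0LessThan)
    also have "\<dots> = (\<Sum>i<n. \<mu> i * \<phi> i v * \<phi> i w)"
    proof (rule sum.cong[OF refl])
      fix i assume i: "i \<in> {..<n}"
      have "(\<Sum>k<n. D $$ (i, k) * P $$ (w, k)) = (\<Sum>k<n. if k = i then D $$ (i, i) * P $$ (w, i) else 0)"
        using diag D i unfolding diagonal_mat_def by (intro sum.cong) auto
      also have "\<dots> = D $$ (i, i) * P $$ (w, i)" using i by simp
      finally show "P $$ (v, i) * (\<Sum>k<n. D $$ (i, k) * P $$ (w, k)) = \<mu> i * \<phi> i v * \<phi> i w"
        unfolding \<mu>_def \<phi>_def by simp
    qed
    finally show ?thesis .
  qed
  have comp: "(\<Sum>i<n. \<phi> i v * \<phi> i w) = (if v = w then 1 else 0)" if v: "v < n" and w: "w < n" for v w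
  proof -
    have "(P * transpose_mat P) $$ (v,w) = (\<Sum>i<n. \<phi> i v * \<phi> i w)"
      unfolding \<phi>_def using P v w by (simp add: scalar_prod_def atLeast0LessThan)
    thus ?thesis using PPt v w by simp
  qed
  have orth: "(\<Sum>v<n. \<phi> i v * \<phi> j v) = (if i = j then 1 else 0)" if i: "i < n" and j: "j < n" for i j
  proof -
    have "(transpose_mat P * P) $$ (i,j) = (\<Sum>v<n. \<phi> i v * \<phi> j v)"
      unfolding \<phi>_def using P i j by (simp add: scalar_prod_def atLeast0LessThan)
    thus ?thesis using PtP i j by simp
  qed
  show ?thesis
    by (rule exI[of _ \<mu>], rule exI[of _ \<phi>]) (use cp Aeq comp orth in auto)
qed


lemma adj_spec:
  assumes g: "simple_graph_on n E"
  shows "\<exists>\<nu> \<phi>. (\<forall>i<n. \<nu> i = adj_eigenvalues n E ! i) \<and>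
     (\<forall>v<n. \<forall>w<n. (if E v w then 1 else 0::real) = (\<Sum>j<n. \<nu> j * \<phi> j v * \<phi> j w)) \<and>
     (\<forall>v<n. \<forall>w<n. (\<Sum>i<n. \<phi> i v * \<phi> i w) = (if v = w then 1 else 0)) \<and>
     (\<forall>i<n. \<forall>j<n. (\<Sum>v<n. \<phi> i v * \<phi> j v) = (if i = j then 1 else 0))"
proof -
  define A where "A = adj_mat n E"
  have A: "A \<in> carrier_mat n n" unfolding A_def adj_mat_def by simp
  have symA: "transpose_mat A = A"
    unfolding A_def adj_mat_def using g unfolding simple_graph_on_def by (intro eq_matI) auto
  obtain \<mu> \<phi> where cp: "mset (map \<mu> [0..<n]) = proots (char_poly A)"
    and Aeq: "\<forall>v<n. \<forall>w<n. A $$ (v,w) = (\<Sum>i<n. \<mu> i * \<phi> i v * \<phi> i w)"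
    and comp: "\<forall>v<n. \<forall>w<n. (\<Sum>i<n. \<phi> i v * \<phi> i w) = (if v = w then 1 else 0)"
    and orth: "\<forall>i<n. \<forall>j<n. (\<Sum>v<n. \<phi> i v * \<phi> j v) = (if i = j then 1 else 0)"
    using sym_decomp[OF A symA] by blast
  define L where "L = adj_eigenvalues n E"
  have L: "L = rev (sort (map \<mu> [0..<n]))"
    unfolding L_def adj_eigenvalues_def A_def[symmetric] cp[symmetric] sorted_list_of_multiset_mset ..
  have "mset L = mset (map \<mu> [0..<n])" unfolding L by simp
  then obtain p where p: "p permutes {..<length (map \<mu> [0..<n])}"
    and pl: "permute_list p (map \<mu> [0..<n]) = L"
    by (rule mset_eq_permutation)
  have p': "p permutes {..<n}" using p by simp
  have pin: "p i < n" if "i < n" for i using permutes_in_image[OF p'] that by simp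
  have Li: "L ! i = \<mu> (p i)" if i: "i < n" for i
    unfolding pl[symmetric] permute_list_def using i pin[OF i] by simp
  define \<nu> where "\<nu> i = \<mu> (p i)" for i
  define \<psi> where "\<psi> i v = \<phi> (p i) v" for i v
  have reidx: "(\<Sum>j<n. f (p j)) = (\<Sum>j<n. f j)" for f :: "nat \<Rightarrow> real"
    using sum.permute[OF p', of f] by (simp add: comp_def)
  have 1: "\<forall>i<n. \<nu> i = L ! i" using Li unfolding \<nu>_def by simp
  have 2: "\<forall>v<n. \<forall>w<n. (if E v w then 1 else 0::real) = (\<Sum>j<n. \<nu> j * \<psi> j v * \<psi> j w)"
  proof (intro allI impI)
    fix v w assume v: "v < n" and w: "w < n"
    have "(if E v w then 1 else 0::real) = A $$ (v,w)" unfolding A_def adj_mat_def using v w by simp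
    also have "\<dots> = (\<Sum>j<n. \<mu> j * \<phi> j v * \<phi> j w)" using Aeq v w by simp
    also have "\<dots> = (\<Sum>j<n. \<nu> j * \<psi> j v * \<psi> j w)" unfolding \<nu>_def \<psi>_def
      by (rule reidx[symmetric])
    finally show "(if E v w then 1 else 0::real) = (\<Sum>j<n. \<nu> j * \<psi> j v * \<psi> j w)" .
  qed
  have 3: "\<forall>v<n. \<forall>w<n. (\<Sum>i<n. \<psi> i v * \<psi> i w) = (if v = w then 1 else 0)"
    unfolding \<psi>_def using comp reidx[of "\<lambda>i. \<phi> i _ * \<phi> i _"] by simp
  have 4: "\<forall>i<n. \<forall>j<n. (\<Sum>v<n. \<psi> i v * \<psi> j v) = (if i = j then 1 else 0)"
  proof (intro allI impI)
    fix i j assume i: "i < n" and j: "j < n"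
    have "p i = p j \<longleftrightarrow> i = j" using permutes_inj[OF p'] by (meson injD)
    thus "(\<Sum>v<n. \<psi> i v * \<psi> j v) = (if i = j then 1 else 0)"
      unfolding \<psi>_def using orth pin[OF i] pin[OF j] by simp
  qed
  show ?thesis using 1 2 3 4 unfolding L_def by blast
qed

lemma sum_split0: fixes n :: nat assumes "n \<ge> 1" shows "(\<Sum>i<n. f i) = f 0 + (\<Sum>i\<in>{1..<n}. f i)"
proof -
  have "{..<n} = insert 0 {1..<n}" using assms by force
  then show ?thesis by (simp add: sum.insert)
qed

lemma L2_set_subset: "finite B \<Longrightarrow> A \<subseteq> B \<Longrightarrow> L2_set f A \<le> L2_set f B"
  unfolding L2_set_def by (intro real_sqrt_le_mono sum_mono2) auto

lemma sq_le_abs: "(x::real)^2 \<le> y^2 \<Longrightarrow> 0 \<le> y \<Longrightarrow> \<bar>x\<bar> \<le> y"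
  by (metis abs_le_square_iff abs_of_nonneg)

lemma core_bound:
  fixes \<nu> t \<alpha> \<beta> :: "nat \<Rightarrow> real" and n :: nat and d lam R :: real
  assumes n: "n \<ge> 1"
    and eigb: "\<And>i. 1 \<le> i \<Longrightarrow> i < n \<Longrightarrow> \<bar>\<nu> i\<bar> \<le> lam"
    and tnorm: "(\<Sum>i<n. (t i)^2) = 1"
    and fbound: "(\<Sum>i<n. ((\<nu> i - d) * t i)^2) \<le> (R * lam)^2"
    and d: "d > 0" and lam: "lam \<ge> 0" and R: "R > 0" and small: "lam * (8 * R + 8) \<le> d"
  shows "\<bar>(\<Sum>i<n. \<nu> i * \<alpha> i * \<beta> i) - d * (\<Sum>i<n. t i * \<alpha> i) * (\<Sum>i<n. t i * \<beta> i)\<bar>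
     \<le> (10 * R + 1) * lam * (L2_set \<alpha> {..<n} * L2_set \<beta> {..<n})"
proof -
  define I where "I = {1..<n}"
  have finI: "finite I" unfolding I_def by simp
  note sp = sum_split0[OF n, folded I_def]
  define \<rho> where "\<rho> = L2_set t I"
  define A where "A = L2_set \<alpha> {..<n}"
  define B where "B = L2_set \<beta> {..<n}"
  define r\<alpha> where "r\<alpha> = (\<Sum>i\<in>I. t i * \<alpha> i)"
  define r\<beta> where "r\<beta> = (\<Sum>i\<in>I. t i * \<beta> i)"
  define E where "E = (\<Sum>i\<in>I. \<nu> i * \<alpha> i * \<beta> i)"
  define q where "q = R * lam / d"
  have A0: "A \<ge> 0" and B0: "B \<ge> 0" and \<rho>0: "\<rho> \<ge> 0" unfolding A_def B_def \<rho>_def by auto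
  have \<rho>sq: "\<rho>^2 = (\<Sum>i\<in>I. (t i)^2)" unfolding \<rho>_def L2_set_def
    by (simp add: sum_nonneg)
  have t0: "(t 0)^2 + \<rho>^2 = 1" using tnorm unfolding sp \<rho>sq .
  have Asq: "A^2 = (\<alpha> 0)^2 + (\<Sum>i\<in>I. (\<alpha> i)^2)" unfolding A_def L2_set_def
    by (simp add: sum_nonneg sp)
  have Bsq: "B^2 = (\<beta> 0)^2 + (\<Sum>i\<in>I. (\<beta> i)^2)" unfolding B_def L2_set_def
    by (simp add: sum_nonneg sp)
  have LAI: "L2_set \<alpha> I \<le> A" unfolding A_def I_def by (rule L2_set_subset) auto
  have LBI: "L2_set \<beta> I \<le> B" unfolding B_def I_def by (rule L2_set_subset) auto
  have a0: "\<bar>\<alpha> 0\<bar> \<le> A"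
  proof -
    have "(\<alpha> 0)^2 \<le> A^2" using Asq by (simp add: sum_nonneg)
    thus ?thesis using A0 by (rule sq_le_abs)
  qed
  have b0: "\<bar>\<beta> 0\<bar> \<le> B"
  proof -
    have "(\<beta> 0)^2 \<le> B^2" using Bsq by (simp add: sum_nonneg)
    thus ?thesis using B0 by (rule sq_le_abs)
  qed
  have fsplit: "((\<nu> 0 - d) * t 0)^2 + (\<Sum>i\<in>I. ((\<nu> i - d) * t i)^2) \<le> (R * lam)^2"
    using fbound unfolding sp .
  have fI: "(\<Sum>i\<in>I. ((\<nu> i - d) * t i)^2) \<le> (R * lam)^2"
    using fsplit by (smt (verit) zero_le_power2)
  have f0: "((\<nu> 0 - d) * t 0)^2 \<le> (R * lam)^2"
    using fsplit by (smt (verit) sum_nonneg zero_le_power2)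
  have lR: "lam * R \<ge> 0" using R lam by simp
  have lR2: "R * lam \<ge> 0" using R lam by simp
  have lamd: "lam \<le> d / 2" using small lR lam by (simp add: algebra_simps)
  have Rlam: "R * lam \<le> d / 8" using small lR lam by (simp add: algebra_simps)
  have "(d/2)^2 * \<rho>^2 = (\<Sum>i\<in>I. (d/2)^2 * (t i)^2)" unfolding \<rho>sq by (simp add: sum_distrib_left)
  also have "\<dots> \<le> (\<Sum>i\<in>I. ((\<nu> i - d) * t i)^2)"
  proof (rule sum_mono)
    fix i assume i: "i \<in> I"
    have "\<bar>\<nu> i\<bar> \<le> lam" using eigb i unfolding I_def by auto
    hence "d / 2 \<le> d - \<nu> i" using lamd by linarith
    hence "(d/2)^2 \<le> (d - \<nu> i)^2" using d by (intro power_mono) auto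
    hence "(d/2)^2 \<le> (\<nu> i - d)^2" by (simp add: power2_commute)
    thus "(d/2)^2 * (t i)^2 \<le> ((\<nu> i - d) * t i)^2"
      by (simp add: power_mult_distrib mult_right_mono)
  qed
  also have "\<dots> \<le> (R * lam)^2" by (rule fI)
  finally have "(d/2 * \<rho>)^2 \<le> (R * lam)^2" by (simp only: power_mult_distrib)
  hence "\<bar>d/2 * \<rho>\<bar> \<le> R * lam" using R lam by (intro sq_le_abs) auto
  hence "d/2 * \<rho> \<le> R * lam" by simp
  hence \<rho>q: "\<rho> \<le> 2 * q" unfolding q_def using d by (simp add: field_simps)
  have q0: "q \<ge> 0" and q8: "q \<le> 1/8" unfolding q_def using R lam d Rlam by (auto simp: field_simps)
  have \<rho>4: "\<rho> \<le> 1/4" using \<rho>q q8 by linarith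
  have t0ge: "\<bar>t 0\<bar> \<ge> 1/2"
  proof -
    have "\<rho>^2 \<le> (1/4)^2" using \<rho>4 \<rho>0 by (intro power_mono) auto
    hence "(1/2)^2 \<le> (t 0)^2" using t0 by (simp add: power2_eq_square)
    thus ?thesis using abs_le_square_iff[of "1/2" "t 0"] by simp
  qed
  have t0le: "\<bar>t 0\<bar> \<le> 1"
  proof -
    have "(t 0)^2 \<le> 1^2" using t0 by (smt (verit) zero_le_power2 one_power2)
    thus ?thesis by (intro sq_le_abs) auto
  qed
  have nu0: "\<bar>\<nu> 0 - d\<bar> * \<bar>t 0\<bar> \<le> R * lam"
  proof -
    have "(\<bar>\<nu> 0 - d\<bar> * \<bar>t 0\<bar>)^2 \<le> (R * lam)^2" using f0 by (simp add: power_mult_distrib)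
    hence "\<bar>\<bar>\<nu> 0 - d\<bar> * \<bar>t 0\<bar>\<bar> \<le> R * lam" using R lam by (intro sq_le_abs) auto
    thus ?thesis by simp
  qed
  have nu0b: "\<bar>\<nu> 0 - d\<bar> \<le> 2 * (R * lam)"
  proof -
    have "\<bar>\<nu> 0 - d\<bar> * (1/2) \<le> \<bar>\<nu> 0 - d\<bar> * \<bar>t 0\<bar>" using t0ge by (intro mult_left_mono) auto
    thus ?thesis using nu0 by (simp add: algebra_simps)
  qed
  have ra: "\<bar>r\<alpha>\<bar> \<le> \<rho> * A"
  proof -
    have "\<bar>r\<alpha>\<bar> \<le> (\<Sum>i\<in>I. \<bar>t i\<bar> * \<bar>\<alpha> i\<bar>)" unfolding r\<alpha>_def by (rule order_trans[OF sum_abs]) (simp add: abs_mult)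
    also have "\<dots> \<le> \<rho> * L2_set \<alpha> I" unfolding \<rho>_def by (rule L2_set_mult_ineq)
    also have "\<dots> \<le> \<rho> * A" using LAI \<rho>0 by (rule mult_left_mono)
    finally show ?thesis .
  qed
  have rb: "\<bar>r\<beta>\<bar> \<le> \<rho> * B"
  proof -
    have "\<bar>r\<beta>\<bar> \<le> (\<Sum>i\<in>I. \<bar>t i\<bar> * \<bar>\<beta> i\<bar>)" unfolding r\<beta>_def by (rule order_trans[OF sum_abs]) (simp add: abs_mult)
    also have "\<dots> \<le> \<rho> * L2_set \<beta> I" unfolding \<rho>_def by (rule L2_set_mult_ineq)
    also have "\<dots> \<le> \<rho> * B" using LBI \<rho>0 by (rule mult_left_mono)
    finally show ?thesis .
  qed
  have Eb: "\<bar>E\<bar> \<le> lam * (A * B)"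
  proof -
    have "\<bar>E\<bar> \<le> (\<Sum>i\<in>I. lam * (\<bar>\<alpha> i\<bar> * \<bar>\<beta> i\<bar>))" unfolding E_def
    proof (rule order_trans[OF sum_abs], rule sum_mono)
      fix i assume i: "i \<in> I"
      have "\<bar>\<nu> i\<bar> \<le> lam" using eigb i unfolding I_def by auto
      thus "\<bar>\<nu> i * \<alpha> i * \<beta> i\<bar> \<le> lam * (\<bar>\<alpha> i\<bar> * \<bar>\<beta> i\<bar>)"
        by (simp add: abs_mult mult_right_mono mult.assoc)
    qed
    also have "\<dots> = lam * (\<Sum>i\<in>I. \<bar>\<alpha> i\<bar> * \<bar>\<beta> i\<bar>)" by (simp add: sum_distrib_left)
    also have "\<dots> \<le> lam * (L2_set \<alpha> I * L2_set \<beta> I)" using lam by (intro mult_left_mono L2_set_mult_ineq)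
    also have "\<dots> \<le> lam * (A * B)" using lam LAI LBI B0 A0 by (intro mult_left_mono mult_mono) auto
    finally show ?thesis .
  qed
  have Sdec: "(\<Sum>i<n. \<nu> i * \<alpha> i * \<beta> i) - d * (\<Sum>i<n. t i * \<alpha> i) * (\<Sum>i<n. t i * \<beta> i)
     = (t 0 ^ 2 * (\<nu> 0 - d) + \<nu> 0 * \<rho>^2) * \<alpha> 0 * \<beta> 0 + E
       - d * t 0 * \<alpha> 0 * r\<beta> - d * t 0 * \<beta> 0 * r\<alpha> - d * r\<alpha> * r\<beta>"
  proof -
    have "\<nu> 0 = \<nu> 0 * ((t 0)^2 + \<rho>^2)" using t0 by simp
    then show ?thesis unfolding sp E_def[symmetric] r\<alpha>_def[symmetric] r\<beta>_def[symmetric]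
      by (simp add: algebra_simps power2_eq_square)
  qed
  define c1 where "c1 = t 0 ^ 2 * (\<nu> 0 - d) + \<nu> 0 * \<rho>^2"
  have nu0abs: "\<bar>\<nu> 0\<bar> \<le> d + 2 * (R * lam)" using nu0b d by linarith
  have c1b: "\<bar>c1\<bar> \<le> R * lam + (d + 2 * (R * lam)) * \<rho>^2"
  proof -
    have "\<bar>t 0 ^ 2 * (\<nu> 0 - d)\<bar> = \<bar>t 0\<bar> * (\<bar>\<nu> 0 - d\<bar> * \<bar>t 0\<bar>)"
      by (simp add: abs_mult power2_eq_square)
    also have "\<dots> \<le> 1 * (R * lam)" by (rule mult_mono[OF t0le nu0]) auto
    finally have 1: "\<bar>t 0 ^ 2 * (\<nu> 0 - d)\<bar> \<le> R * lam" by simp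
    have 2: "\<bar>\<nu> 0 * \<rho>^2\<bar> \<le> (d + 2 * (R * lam)) * \<rho>^2"
      using nu0abs by (simp add: abs_mult mult_right_mono)
    show ?thesis unfolding c1_def using 1 2 by linarith
  qed
  have ab: "\<bar>\<alpha> 0\<bar> * \<bar>\<beta> 0\<bar> \<le> A * B" using a0 b0 A0 by (intro mult_mono) auto
  have K10: "0 \<le> R * lam + (d + 2 * (R * lam)) * \<rho>^2" using c1b abs_ge_zero[of c1] by linarith
  have T1: "\<bar>c1 * \<alpha> 0 * \<beta> 0\<bar> \<le> (R * lam + (d + 2 * (R * lam)) * \<rho>^2) * (A * B)"
  proof -
    have "\<bar>c1 * \<alpha> 0 * \<beta> 0\<bar> = \<bar>c1\<bar> * (\<bar>\<alpha> 0\<bar> * \<bar>\<beta> 0\<bar>)" by (simp add: abs_mult)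
    also have "\<dots> \<le> (R * lam + (d + 2 * (R * lam)) * \<rho>^2) * (A * B)"
      by (rule mult_mono[OF c1b ab K10]) simp
    finally show ?thesis .
  qed
  have T2: "\<bar>d * t 0 * \<alpha> 0 * r\<beta>\<bar> \<le> d * \<rho> * (A * B)"
  proof -
    have "\<bar>d * t 0 * \<alpha> 0 * r\<beta>\<bar> = d * (\<bar>t 0\<bar> * (\<bar>\<alpha> 0\<bar> * \<bar>r\<beta>\<bar>))" using d by (simp add: abs_mult)
    also have "\<dots> \<le> d * (1 * (A * (\<rho> * B)))" using d t0le a0 rb A0 by (intro mult_left_mono mult_mono) auto
    finally show ?thesis by (simp add: algebra_simps)
  qed
  have T3: "\<bar>d * t 0 * \<beta> 0 * r\<alpha>\<bar> \<le> d * \<rho> * (A * B)"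
  proof -
    have "\<bar>d * t 0 * \<beta> 0 * r\<alpha>\<bar> = d * (\<bar>t 0\<bar> * (\<bar>\<beta> 0\<bar> * \<bar>r\<alpha>\<bar>))" using d by (simp add: abs_mult)
    also have "\<dots> \<le> d * (1 * (B * (\<rho> * A)))" using d t0le b0 ra B0 by (intro mult_left_mono mult_mono) auto
    finally show ?thesis by (simp add: algebra_simps)
  qed
  have T4: "\<bar>d * r\<alpha> * r\<beta>\<bar> \<le> d * \<rho>^2 * (A * B)"
  proof -
    have "\<bar>d * r\<alpha> * r\<beta>\<bar> = d * (\<bar>r\<alpha>\<bar> * \<bar>r\<beta>\<bar>)" using d by (simp add: abs_mult)
    also have "\<dots> \<le> d * ((\<rho> * A) * (\<rho> * B))" using d ra rb \<rho>0 A0 by (intro mult_left_mono mult_mono) auto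
    finally show ?thesis by (simp add: algebra_simps power2_eq_square)
  qed
  define K where "K = R * lam + (d + 2 * (R * lam)) * \<rho>^2 + lam + 2 * (d * \<rho>) + d * \<rho>^2"
  have SK: "\<bar>(\<Sum>i<n. \<nu> i * \<alpha> i * \<beta> i) - d * (\<Sum>i<n. t i * \<alpha> i) * (\<Sum>i<n. t i * \<beta> i)\<bar> \<le> K * (A * B)"
    unfolding Sdec c1_def[symmetric] K_def using T1 T2 T3 T4 Eb by (simp add: algebra_simps)
  have d\<rho>: "d * \<rho> \<le> 2 * (R * lam)" using \<rho>q d unfolding q_def by (simp add: field_simps)
  have d\<rho>2: "d * \<rho>^2 \<le> (R * lam) / 2"
  proof -
    have "d * \<rho>^2 = (d * \<rho>) * \<rho>" by (simp add: power2_eq_square)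
    also have "\<dots> \<le> (2 * (R * lam)) * (1/4)" by (rule mult_mono[OF d\<rho> \<rho>4]) (use lR2 \<rho>0 in auto)
    finally show ?thesis by simp
  qed
  have R\<rho>2: "2 * (R * lam) * \<rho>^2 \<le> (R * lam) / 8"
  proof -
    have "\<rho>^2 \<le> (1/4)^2" using \<rho>4 \<rho>0 by (intro power_mono) auto
    hence "2 * (R * lam) * \<rho>^2 \<le> 2 * (R * lam) * (1/4)^2" using lR by (intro mult_left_mono) (auto simp: mult.commute)
    thus ?thesis by (simp add: power2_eq_square)
  qed
  have "K \<le> (10 * R + 1) * lam" unfolding K_def using d\<rho> d\<rho>2 R\<rho>2 lR
    by (simp add: algebra_simps)
  hence "K * (A * B) \<le> (10 * R + 1) * lam * (A * B)" using A0 B0 by (intro mult_right_mono) auto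
  with SK show ?thesis unfolding A_def B_def by linarith
qed
lemma parseval:
  fixes \<phi> :: "nat \<Rightarrow> nat \<Rightarrow> real"
  assumes comp: "\<And>v w. v < n \<Longrightarrow> w < n \<Longrightarrow> (\<Sum>i<n. \<phi> i v * \<phi> i w) = (if v = w then 1 else 0)"
  shows "(\<Sum>i<n. (\<Sum>v<n. \<phi> i v * z v) * (\<Sum>w<n. \<phi> i w * z' w)) = (\<Sum>v<n. z v * z' v)"
proof -
  have "(\<Sum>i<n. (\<Sum>v<n. \<phi> i v * z v) * (\<Sum>w<n. \<phi> i w * z' w))
      = (\<Sum>i<n. \<Sum>v<n. \<Sum>w<n. \<phi> i v * z v * (\<phi> i w * z' w))"
    by (simp add: sum_product)
  also have "\<dots> = (\<Sum>v<n. \<Sum>i<n. \<Sum>w<n. \<phi> i v * z v * (\<phi> i w * z' w))"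
    by (rule sum.swap)
  also have "\<dots> = (\<Sum>v<n. \<Sum>w<n. \<Sum>i<n. \<phi> i v * z v * (\<phi> i w * z' w))"
    by (rule sum.cong[OF refl], rule sum.swap)
  also have "\<dots> = (\<Sum>v<n. \<Sum>w<n. z v * z' w * (\<Sum>i<n. \<phi> i v * \<phi> i w))"
    by (simp add: sum_distrib_left ac_simps)
  also have "\<dots> = (\<Sum>v<n. \<Sum>w<n. if w = v then z v * z' v else 0)"
    by (rule sum.cong[OF refl], rule sum.cong[OF refl]) (auto simp: comp)
  also have "\<dots> = (\<Sum>v<n. z v * z' v)" by simp
  finally show ?thesis .
qed

lemma rotate_eigen:
  fixes \<phi> :: "nat \<Rightarrow> nat \<Rightarrow> real" and a :: "nat \<Rightarrow> nat \<Rightarrow> real"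
  assumes decomp: "\<And>v w. v < n \<Longrightarrow> w < n \<Longrightarrow> a v w = (\<Sum>j<n. \<nu> j * \<phi> j v * \<phi> j w)"
    and orth: "\<And>i j. i < n \<Longrightarrow> j < n \<Longrightarrow> (\<Sum>v<n. \<phi> i v * \<phi> j v) = (if i = j then 1 else 0)"
    and i: "i < n"
  shows "(\<Sum>v<n. \<phi> i v * (\<Sum>w<n. a v w)) = \<nu> i * (\<Sum>w<n. \<phi> i w)"
proof -
  have "(\<Sum>v<n. \<phi> i v * (\<Sum>w<n. a v w)) = (\<Sum>v<n. \<Sum>w<n. \<Sum>j<n. \<phi> i v * (\<nu> j * \<phi> j v * \<phi> j w))"
    by (simp add: decomp sum_distrib_left)
  also have "\<dots> = (\<Sum>w<n. \<Sum>v<n. \<Sum>j<n. \<phi> i v * (\<nu> j * \<phi> j v * \<phi> j w))"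
    by (rule sum.swap)
  also have "\<dots> = (\<Sum>w<n. \<Sum>j<n. \<Sum>v<n. \<phi> i v * (\<nu> j * \<phi> j v * \<phi> j w))"
    by (rule sum.cong[OF refl], rule sum.swap)
  also have "\<dots> = (\<Sum>w<n. \<Sum>j<n. \<nu> j * \<phi> j w * (\<Sum>v<n. \<phi> i v * \<phi> j v))"
    by (simp add: sum_distrib_left ac_simps)
  also have "\<dots> = (\<Sum>w<n. \<Sum>j<n. if j = i then \<nu> i * \<phi> i w else 0)"
    by (rule sum.cong[OF refl], rule sum.cong[OF refl]) (use i in \<open>auto simp: orth\<close>)
  also have "\<dots> = \<nu> i * (\<Sum>w<n. \<phi> i w)" using i by (simp add: sum_distrib_left)
  finally show ?thesis .
qed

lemma bilinear_eigen:
  fixes \<phi> :: "nat \<Rightarrow> nat \<Rightarrow> real" and a :: "nat \<Rightarrow> nat \<Rightarrow> real"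
  assumes decomp: "\<And>v w. v < n \<Longrightarrow> w < n \<Longrightarrow> a v w = (\<Sum>j<n. \<nu> j * \<phi> j v * \<phi> j w)"
  shows "(\<Sum>v<n. \<Sum>w<n. a v w * x v * y w) = (\<Sum>j<n. \<nu> j * (\<Sum>v<n. \<phi> j v * x v) * (\<Sum>w<n. \<phi> j w * y w))"
proof -
  have "(\<Sum>v<n. \<Sum>w<n. a v w * x v * y w) = (\<Sum>v<n. \<Sum>w<n. \<Sum>j<n. \<nu> j * (\<phi> j v * x v) * (\<phi> j w * y w))"
    by (rule sum.cong[OF refl], rule sum.cong[OF refl]) (auto simp: decomp sum_distrib_left sum_distrib_right mult_ac)
  also have "\<dots> = (\<Sum>v<n. \<Sum>j<n. \<Sum>w<n. \<nu> j * (\<phi> j v * x v) * (\<phi> j w * y w))"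
    by (rule sum.cong[OF refl], rule sum.swap)
  also have "\<dots> = (\<Sum>j<n. \<Sum>v<n. \<Sum>w<n. \<nu> j * (\<phi> j v * x v) * (\<phi> j w * y w))"
    by (rule sum.swap)
  also have "\<dots> = (\<Sum>j<n. \<nu> j * (\<Sum>v<n. \<phi> j v * x v) * (\<Sum>w<n. \<phi> j w * y w))"
    by (simp add: sum_distrib_left sum_distrib_right ac_simps)
  finally show ?thesis .
qed


lemma graph_bound:
  fixes a \<phi> :: "nat \<Rightarrow> nat \<Rightarrow> real" and \<nu> x y :: "nat \<Rightarrow> real" and n :: nat and d lam R :: real
  assumes n: "n \<ge> 1"
   and decomp: "\<And>v w. v < n \<Longrightarrow> w < n \<Longrightarrow> a v w = (\<Sum>j<n. \<nu> j * \<phi> j v * \<phi> j w)"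
   and comp: "\<And>v w. v < n \<Longrightarrow> w < n \<Longrightarrow> (\<Sum>i<n. \<phi> i v * \<phi> i w) = (if v = w then 1 else 0)"
   and orth: "\<And>i j. i < n \<Longrightarrow> j < n \<Longrightarrow> (\<Sum>v<n. \<phi> i v * \<phi> j v) = (if i = j then 1 else 0)"
   and eigb: "\<And>i. 1 \<le> i \<Longrightarrow> i < n \<Longrightarrow> \<bar>\<nu> i\<bar> \<le> lam"
   and degb: "\<And>v. v < n \<Longrightarrow> \<bar>(\<Sum>w<n. a v w) - d\<bar> \<le> R * lam"
   and d: "d > 0" and lam: "lam \<ge> 0" and R: "R > 0" and small: "lam * (8 * R + 8) \<le> d"
  shows "\<bar>(\<Sum>v<n. \<Sum>w<n. a v w * x v * y w) - d / real n * (\<Sum>v<n. x v) * (\<Sum>v<n. y v)\<bar>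
     \<le> (10 * R + 1) * lam * sqrt ((\<Sum>v<n. (x v)^2) * (\<Sum>v<n. (y v)^2))"
proof -
  define \<alpha> where "\<alpha> i = (\<Sum>v<n. \<phi> i v * x v)" for i
  define \<beta> where "\<beta> i = (\<Sum>v<n. \<phi> i v * y v)" for i
  define s where "s i = (\<Sum>v<n. \<phi> i v)" for i
  define t where "t i = s i / sqrt (real n)" for i
  have sn: "sqrt (real n) > 0" using n by simp
  have snn: "sqrt (real n) * sqrt (real n) = real n" by simp
  have Bil: "(\<Sum>v<n. \<Sum>w<n. a v w * x v * y w) = (\<Sum>i<n. \<nu> i * \<alpha> i * \<beta> i)"
    unfolding \<alpha>_def \<beta>_def by (rule bilinear_eigen[OF decomp])
  have sx: "(\<Sum>v<n. x v) = (\<Sum>i<n. s i * \<alpha> i)"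
    using parseval[OF comp, of "\<lambda>_. 1" x] unfolding s_def \<alpha>_def by simp
  have sy: "(\<Sum>v<n. y v) = (\<Sum>i<n. s i * \<beta> i)"
    using parseval[OF comp, of "\<lambda>_. 1" y] unfolding s_def \<beta>_def by simp
  have ss: "(\<Sum>i<n. s i * s i) = real n"
    using parseval[OF comp, of "\<lambda>_. 1" "\<lambda>_. 1"] unfolding s_def by simp
  have aa: "(\<Sum>i<n. (\<alpha> i)^2) = (\<Sum>v<n. (x v)^2)"
    using parseval[OF comp, of x x] unfolding \<alpha>_def by (simp add: power2_eq_square)
  have bb: "(\<Sum>i<n. (\<beta> i)^2) = (\<Sum>v<n. (y v)^2)"
    using parseval[OF comp, of y y] unfolding \<beta>_def by (simp add: power2_eq_square)
  have tnorm: "(\<Sum>i<n. (t i)^2) = 1"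
  proof -
    have "(\<Sum>i<n. (t i)^2) = (\<Sum>i<n. s i * s i) / real n"
      unfolding t_def by (simp add: power_divide sum_divide_distrib power2_eq_square)
    thus ?thesis using ss n by simp
  qed
  have ta: "(\<Sum>i<n. t i * \<alpha> i) = (\<Sum>i<n. s i * \<alpha> i) / sqrt (real n)"
    unfolding t_def by (simp add: sum_divide_distrib)
  have tb: "(\<Sum>i<n. t i * \<beta> i) = (\<Sum>i<n. s i * \<beta> i) / sqrt (real n)"
    unfolding t_def by (simp add: sum_divide_distrib)
  have main2: "d / real n * (\<Sum>v<n. x v) * (\<Sum>v<n. y v) = d * (\<Sum>i<n. t i * \<alpha> i) * (\<Sum>i<n. t i * \<beta> i)"
    unfolding ta tb sx sy using sn snn by (simp add: field_simps)
  define g where "g v = ((\<Sum>w<n. a v w) - d) / sqrt (real n)" for v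
  have rot: "(\<Sum>v<n. \<phi> i v * g v) = (\<nu> i - d) * t i" if i: "i < n" for i
  proof -
    have "(\<Sum>v<n. \<phi> i v * g v) = (\<Sum>v<n. \<phi> i v * (\<Sum>w<n. a v w) - d * \<phi> i v) / sqrt (real n)"
      unfolding g_def sum_divide_distrib by (rule sum.cong[OF refl]) (simp add: field_simps)
    also have "\<dots> = ((\<Sum>v<n. \<phi> i v * (\<Sum>w<n. a v w)) - d * s i) / sqrt (real n)"
      unfolding s_def by (simp add: sum_subtractf sum_distrib_left)
    also have "\<dots> = (\<nu> i * s i - d * s i) / sqrt (real n)"
      using rotate_eigen[OF decomp orth i] unfolding s_def by simp
    finally show ?thesis unfolding t_def by (simp add: algebra_simps)
  qed
  have fbound: "(\<Sum>i<n. ((\<nu> i - d) * t i)^2) \<le> (R * lam)^2"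
  proof -
    have "(\<Sum>i<n. ((\<nu> i - d) * t i)^2) = (\<Sum>i<n. (\<Sum>v<n. \<phi> i v * g v) * (\<Sum>w<n. \<phi> i w * g w))"
      by (rule sum.cong[OF refl]) (simp add: rot power2_eq_square)
    also have "\<dots> = (\<Sum>v<n. g v * g v)" by (rule parseval[OF comp])
    also have "\<dots> \<le> (\<Sum>v<n. (R * lam)^2 / real n)"
    proof (rule sum_mono)
      fix v assume v: "v \<in> {..<n}"
      have "\<bar>(\<Sum>w<n. a v w) - d\<bar> \<le> R * lam" using degb v by simp
      hence "((\<Sum>w<n. a v w) - d)^2 \<le> (R * lam)^2"
        by (metis abs_le_square_iff abs_of_nonneg abs_ge_zero order_trans)
      thus "g v * g v \<le> (R * lam)^2 / real n" unfolding g_def using n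
        by (simp add: power2_eq_square[symmetric] power_divide divide_right_mono)
    qed
    also have "\<dots> = (R * lam)^2" using n by simp
    finally show ?thesis .
  qed
  have cb: "\<bar>(\<Sum>i<n. \<nu> i * \<alpha> i * \<beta> i) - d * (\<Sum>i<n. t i * \<alpha> i) * (\<Sum>i<n. t i * \<beta> i)\<bar>
     \<le> (10 * R + 1) * lam * (L2_set \<alpha> {..<n} * L2_set \<beta> {..<n})"
    by (rule core_bound[OF n eigb tnorm fbound d lam R small])
  have "L2_set \<alpha> {..<n} * L2_set \<beta> {..<n} = sqrt ((\<Sum>v<n. (x v)^2) * (\<Sum>v<n. (y v)^2))"
    unfolding L2_set_def aa bb by (simp add: real_sqrt_mult)
  with cb show ?thesis unfolding Bil main2 by simp
qed


lemma card_pairs_sum: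
  fixes P :: "nat \<Rightarrow> nat \<Rightarrow> bool"
  shows "real (card {(u,w). u < n \<and> w < n \<and> P u w}) = (\<Sum>u<n. \<Sum>w<n. if P u w then 1 else 0)"
proof -
  have "{(u,w). u < n \<and> w < n \<and> P u w} = {p \<in> {..<n} \<times> {..<n}. P (fst p) (snd p)}" by auto
  hence "real (card {(u,w). u < n \<and> w < n \<and> P u w}) = (\<Sum>p\<in>{p \<in> {..<n} \<times> {..<n}. P (fst p) (snd p)}. 1)"
    by (simp only: real_of_card)
  also have "\<dots> = (\<Sum>p\<in>{..<n} \<times> {..<n}. if P (fst p) (snd p) then 1 else 0)"
    by (rule sum.inter_filter) simp
  also have "\<dots> = (\<Sum>u<n. \<Sum>w<n. if P u w then 1 else 0)"
    by (simp add: sum.cartesian_product split_def)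
  finally show ?thesis .
qed

lemma card_sum:
  fixes U :: "nat set"
  assumes "U \<subseteq> {..<n}"
  shows "real (card U) = (\<Sum>v<n. if v \<in> U then 1 else 0)"
proof -
  have "U = {v \<in> {..<n}. v \<in> U}" using assms by auto
  hence "real (card U) = (\<Sum>v\<in>{v \<in> {..<n}. v \<in> U}. 1)" by (simp only: real_of_card)
  also have "\<dots> = (\<Sum>v<n. if v \<in> U then 1 else 0)" by (rule sum.inter_filter) simp
  finally show ?thesis .
qed

lemma per_n:
  fixes E :: "nat \<Rightarrow> nat \<Rightarrow> bool" and n :: nat and lam R :: real
  assumes g: "simple_graph_on n E" and n: "n \<ge> 1"
    and eigb: "\<And>i. 1 \<le> i \<Longrightarrow> i < n \<Longrightarrow> \<bar>adj_eigenvalues n E ! i\<bar> \<le> lam"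
    and degs: "real (max_degree n E) - real (min_degree n E) \<le> R * lam"
    and R: "R > 0" and lam: "lam \<ge> 0" and d: "avg_degree n E > 0"
    and small: "lam * (8 * R + 8) \<le> avg_degree n E"
    and U: "U \<subseteq> {..<n}" and W: "W \<subseteq> {..<n}"
  shows "\<bar>real (edges_between E U W) - avg_degree n E / real n * real (card U) * real (card W)\<bar>
             \<le> (10 * R + 1) * lam * sqrt (real (card U) * real (card W))"
proof -
  define d where "d = avg_degree n E"
  obtain \<nu> \<phi> where nu: "\<forall>i<n. \<nu> i = adj_eigenvalues n E ! i"
    and decomp: "\<forall>v<n. \<forall>w<n. (if E v w then 1 else 0::real) = (\<Sum>j<n. \<nu> j * \<phi> j v * \<phi> j w)"
    and comp: "\<forall>v<n. \<forall>w<n. (\<Sum>i<n. \<phi> i v * \<phi> i w) = (if v = w then 1 else 0)"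
    and orth: "\<forall>i<n. \<forall>j<n. (\<Sum>v<n. \<phi> i v * \<phi> j v) = (if i = j then 1 else 0)"
    using adj_spec[OF g] by blast
  define a where "a v w = (if E v w then 1 else 0::real)" for v w
  define x where "x v = (if v \<in> U then 1 else 0::real)" for v
  define y where "y v = (if v \<in> W then 1 else 0::real)" for v
  have degsum: "(\<Sum>w<n. a v w) = real (degree_in n E v)" for v
  proof -
    have "{u. u < n \<and> E v u} = {u \<in> {..<n}. E v u}" by auto
    hence "real (degree_in n E v) = (\<Sum>u\<in>{u \<in> {..<n}. E v u}. 1)"
      unfolding degree_in_def by (simp only: real_of_card)
    also have "\<dots> = (\<Sum>w<n. a v w)" unfolding a_def by (rule sum.inter_filter) simp
    finally show ?thesis ..
  qed
  have fin: "finite (degree_in n E ` {..<n})" by simp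
  have "0 \<in> {..<n}" using n by simp
  hence ne: "degree_in n E ` {..<n} \<noteq> {}" by blast
  have mn: "min_degree n E \<le> degree_in n E v" and mx: "degree_in n E v \<le> max_degree n E" if "v < n" for v
    unfolding min_degree_def max_degree_def using that fin by auto
  have dsum: "d = (\<Sum>v<n. real (degree_in n E v)) / real n" unfolding d_def avg_degree_def ..
  have "(\<Sum>v<n. real (min_degree n E)) \<le> (\<Sum>v<n. real (degree_in n E v))"
    using mn by (intro sum_mono) auto
  hence dmin: "real (min_degree n E) \<le> d" unfolding dsum using n by (simp add: field_simps)
  have "(\<Sum>v<n. real (degree_in n E v)) \<le> (\<Sum>v<n. real (max_degree n E))"
    using mx by (intro sum_mono) auto
  hence dmax: "d \<le> real (max_degree n E)" unfolding dsum using n by (simp add: field_simps)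
  have degb: "\<bar>(\<Sum>w<n. a v w) - d\<bar> \<le> R * lam" if v: "v < n" for v
    unfolding degsum using mn[OF v] mx[OF v] dmin dmax degs by linarith
  have eigb': "\<bar>\<nu> i\<bar> \<le> lam" if "1 \<le> i" "i < n" for i using nu eigb that by simp
  have gb: "\<bar>(\<Sum>v<n. \<Sum>w<n. a v w * x v * y w) - d / real n * (\<Sum>v<n. x v) * (\<Sum>v<n. y v)\<bar>
     \<le> (10 * R + 1) * lam * sqrt ((\<Sum>v<n. (x v)^2) * (\<Sum>v<n. (y v)^2))"
    by (rule graph_bound[OF n _ _ _ eigb' degb _ lam R]) (use decomp comp orth d small in \<open>auto simp: a_def d_def\<close>)
  have e: "real (edges_between E U W) = (\<Sum>v<n. \<Sum>w<n. a v w * x v * y w)"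
  proof -
    have "{(u, w). u \<in> U \<and> w \<in> W \<and> E u w} = {(u,w). u < n \<and> w < n \<and> (u \<in> U \<and> w \<in> W \<and> E u w)}"
      using U W by auto
    hence "real (edges_between E U W) = (\<Sum>u<n. \<Sum>w<n. if u \<in> U \<and> w \<in> W \<and> E u w then 1 else 0)"
      unfolding edges_between_def using card_pairs_sum by simp
    also have "\<dots> = (\<Sum>v<n. \<Sum>w<n. a v w * x v * y w)"
      unfolding a_def x_def y_def by (intro sum.cong) auto
    finally show ?thesis .
  qed
  have cu: "real (card U) = (\<Sum>v<n. x v)" unfolding x_def by (rule card_sum[OF U])
  have cw: "real (card W) = (\<Sum>v<n. y v)" unfolding y_def by (rule card_sum[OF W])
  have cu2: "(\<Sum>v<n. (x v)^2) = (\<Sum>v<n. x v)" unfolding x_def by (intro sum.cong) auto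
  have cw2: "(\<Sum>v<n. (y v)^2) = (\<Sum>v<n. y v)" unfolding y_def by (intro sum.cong) auto
  show ?thesis using gb unfolding e cu cw cu2 cw2 d_def .
qed


theorem mainTheorem7:
  fixes G :: "nat \<Rightarrow> nat \<Rightarrow> nat \<Rightarrow> bool" and lam :: "nat \<Rightarrow> real" and R :: real
  assumes graphs: "\<And>n. simple_graph_on n (G n)"
    and eig: "\<And>n i. n \<ge> 1 \<Longrightarrow> 1 \<le> i \<Longrightarrow> i < n \<Longrightarrow> \<bar>adj_eigenvalues n (G n) ! i\<bar> \<le> lam n"
    and R_pos: "R > 0"
    and degs: "\<And>n. n \<ge> 1 \<Longrightarrow> real (max_degree n (G n)) - real (min_degree n (G n)) \<le> R * lam n"
    and lim: "(\<lambda>n. lam n / avg_degree n (G n)) \<longlonglongrightarrow> 0"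
  shows "\<forall>\<^sub>F n in sequentially. \<forall>U W. U \<subseteq> {..<n} \<longrightarrow> W \<subseteq> {..<n} \<longrightarrow>
           \<bar>real (edges_between (G n) U W) - avg_degree n (G n) / real n * real (card U) * real (card W)\<bar>
             \<le> (10 * R + 1) * lam n * sqrt (real (card U) * real (card W))"
proof -
  define \<eta> :: real where "\<eta> = 1 / (8 * R + 8)"
  have \<eta>: "\<eta> > 0" unfolding \<eta>_def using R_pos by simp
  have ev1: "\<forall>\<^sub>F n in sequentially. lam n / avg_degree n (G n) < \<eta>"
    using order_tendstoD(2)[OF lim \<eta>] .
  have ev2: "\<forall>\<^sub>F n in sequentially. n \<ge> 2" by (rule eventually_ge_at_top)
  show ?thesis
  proof (rule eventually_mono[OF eventually_conj[OF ev1 ev2]], intro allI impI)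
    fix n U W
    assume H: "lam n / avg_degree n (G n) < \<eta> \<and> 2 \<le> n" and U: "U \<subseteq> {..<n}" and W: "W \<subseteq> {..<n}"
    define E where "E = G n"
    define d where "d = avg_degree n E"
    have n1: "n \<ge> 1" and n2: "n \<ge> 2" using H by auto
    have lam0: "lam n \<ge> 0" using eig[OF n1, of 1] n2 by (meson abs_ge_zero order_trans le_refl less_le_trans one_less_numeral_iff semiring_norm(76))
    have d0: "d \<ge> 0" unfolding d_def avg_degree_def by (intro divide_nonneg_nonneg sum_nonneg) auto
    have rhs0: "0 \<le> (10 * R + 1) * lam n * sqrt (real (card U) * real (card W))"
      using R_pos lam0 by simp
    show "\<bar>real (edges_between (G n) U W) - avg_degree n (G n) / real n * real (card U) * real (card W)\<bar>
             \<le> (10 * R + 1) * lam n * sqrt (real (card U) * real (card W))"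
    proof (cases "d = 0")
      case True
      have "(\<Sum>v<n. real (degree_in n E v)) = 0"
        using True n1 unfolding d_def avg_degree_def by simp
      hence deg0: "real (degree_in n E v) = 0" if "v < n" for v
        using that by (subst (asm) sum_nonneg_eq_0_iff) auto
      have noE: "\<not> E v u" if "v < n" "u < n" for v u
      proof
        assume "E v u"
        hence "u \<in> {u. u < n \<and> E v u}" using that by simp
        moreover have "finite {u. u < n \<and> E v u}" by simp
        ultimately have "card {u. u < n \<and> E v u} > 0" by (metis card_gt_0_iff empty_iff)
        thus False using deg0[OF that(1)] unfolding degree_in_def by simp
      qed
      have S: "{(u, w). u \<in> U \<and> w \<in> W \<and> E u w} = {}" using U W noE by auto
      have "edges_between E U W = 0" unfolding edges_between_def S by simp
      thus ?thesis using rhs0 True unfolding E_def d_def by simp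
    next
      case False
      hence dpos: "d > 0" using d0 by simp
      have "lam n / d < \<eta>" using H unfolding d_def E_def by simp
      hence "lam n < \<eta> * d" using dpos by (simp add: divide_less_eq)
      hence small: "lam n * (8 * R + 8) \<le> d" unfolding \<eta>_def using R_pos
        by (simp add: field_simps)
      show ?thesis
        using per_n[OF graphs[of n] n1 eig[OF n1] degs[OF n1] R_pos lam0 _ _ U W] dpos small
        unfolding d_def E_def by simp
    qed
  qed
qed


end
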